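(* Let $A\subseteq\Gamma$ be a finite set and $D\subseteq A-A$, and put $\sigma:=\sum_{s\in D}|A-A_s|$. Then there are $l\ge|D|^2/(4\sigma)$ elements $s_1,\dots,s_l\in D$ such that the sets $A_{s_1},\dots,A_{s_l}$ are pairwise disjoint. In particular, if $|A^2-\Delta(A)|\le|A-A|^2/M$ for a real $M>0$, then there are at least $M/4$ pairwise disjoint sets $A_{s_1},\dots,A_{s_l}$.
   Context: $\Gamma$ is an abelian group. $A_s=A\cap(A-s)$. $A^2-\Delta(A)=\{(a_1-a,a_2-a):a_1,a_2,a\in A\}\subseteq\Gamma^2$. *)

theory Defs
  imports Complex_Main
begin

definition diffset :: "'a::ab_group_add set \<Rightarrow> 'a set \<Rightarrow> 'a set" where
  "diffset X Y = {x - y | x y. x \<in> X \<and> y \<in> Y}"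

definition translate_minus :: "'a::ab_group_add set \<Rightarrow> 'a \<Rightarrow> 'a set" where
  "translate_minus A s = (\<lambda>a. a - s) ` A"

definition Ash :: "'a::ab_group_add set \<Rightarrow> 'a \<Rightarrow> 'a set" where
  "Ash A s = A \<inter> translate_minus A s"

definition sq_minus_diag :: "'a::ab_group_add set \<Rightarrow> ('a \<times> 'a) set" where
  "sq_minus_diag A = {(a1 - a, a2 - a) | a1 a2 a. a1 \<in> A \<and> a2 \<in> A \<and> a \<in> A}"

end

theory Submission
  imports Defs
begin

lemma diffset_finite: "finite A \<Longrightarrow> finite B \<Longrightarrow> finite (diffset A B)"
proof -
  assume "finite A" "finite B"
  have "diffset A B = (\<lambda>(x,y). x - y) ` (A \<times> B)" by (auto simp: diffset_def)
  thus ?thesis using \<open>finite A\<close> \<open>finite B\<close> by simp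
qed

lemma Ash_ne: "t \<in> diffset A A \<Longrightarrow> Ash A t \<noteq> {}"
proof -
  assume "t \<in> diffset A A"
  then obtain x y where xy: "x \<in> A" "y \<in> A" "t = x - y" by (auto simp: diffset_def)
  hence "y \<in> Ash A t" by (auto simp: Ash_def translate_minus_def image_iff intro!: bexI[of _ x])
  thus ?thesis by auto
qed

lemma meet: "Ash A s \<inter> Ash A t \<noteq> {} \<Longrightarrow> s \<in> diffset A (Ash A t)"
proof -
  assume "Ash A s \<inter> Ash A t \<noteq> {}"
  then obtain x where x: "x \<in> Ash A s" "x \<in> Ash A t" by auto
  then obtain a where a: "a \<in> A" "x = a - s" by (auto simp: Ash_def translate_minus_def)
  have "s = a - x" using a by simp
  thus ?thesis using a x unfolding diffset_def by blast
qed

lemma part1: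
  assumes fA: "finite A" and DA: "D \<subseteq> diffset A A"
  shows "\<exists>S. S \<subseteq> D \<and> (\<forall>s\<in>S. \<forall>t\<in>S. s \<noteq> t \<longrightarrow> Ash A s \<inter> Ash A t = {})
     \<and> (real (card D))^2 / (4 * (\<Sum>t\<in>D. real (card (diffset A (Ash A t))))) \<le> real (card S)"
proof (cases "D = {}")
  case True thus ?thesis by (intro exI[of _ "{}"]) auto
next
  case False
  define w where "w t = real (card (diffset A (Ash A t)))" for t
  define \<sigma> where "\<sigma> = sum w D"
  have fD: "finite D" using DA diffset_finite[OF fA fA] finite_subset by blast
  have w1: "w t \<ge> 1" if "t \<in> D" for t
  proof -
    have "Ash A t \<noteq> {}" using Ash_ne that DA by blast
    then obtain y where y: "y \<in> Ash A t" by auto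
    hence "y \<in> A" by (simp add: Ash_def)
    hence "y - y \<in> diffset A (Ash A t)" using y unfolding diffset_def by blast
    moreover have "finite (diffset A (Ash A t))"
      by (rule diffset_finite[OF fA]) (simp add: Ash_def fA)
    ultimately have "card (diffset A (Ash A t)) \<ge> 1"
      by (metis One_nat_def Suc_leI card_gt_0_iff empty_iff)
    thus ?thesis unfolding w_def by simp
  qed
  have w0: "w t \<ge> 0" if "t \<in> D" for t using w1[OF that] by linarith
  have cDpos: "card D > 0" using False fD by (simp add: card_gt_0_iff)
  have sigpos: "\<sigma> > 0" unfolding \<sigma>_def
    using sum_pos[OF fD False] w1 by (meson less_le_trans zero_less_one)
  define c where "c = 2 * \<sigma> / real (card D)"
  define D' where "D' = {s\<in>D. w s \<le> c}"
  have D'D: "D' \<subseteq> D" by (auto simp: D'_def)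
  have fD': "finite D'" using fD D'D finite_subset by blast
  have "real (card (D - D')) * c = (\<Sum>s\<in>D - D'. c)" by simp
  also have "\<dots> \<le> (\<Sum>s\<in>D - D'. w s)" by (rule sum_mono) (auto simp: D'_def)
  also have "\<dots> \<le> \<sigma>" unfolding \<sigma>_def
    by (rule sum_mono2[OF fD]) (auto intro: w0)
  finally have "real (card (D - D')) * (2 * \<sigma> / real (card D)) \<le> \<sigma>" unfolding c_def .
  hence "real (card (D - D')) * 2 \<le> real (card D)"
    using sigpos cDpos by (simp add: field_simps)
  moreover have "card D' = card D - card (D - D')"
    using card_Diff_subset[OF fD' D'D] card_mono[OF fD D'D] by (simp add: Diff_Diff_Int Int_absorb1[OF D'D])
  moreover have "card (D - D') \<le> card D" using fD by (simp add: card_mono)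
  ultimately have hD': "real (card D) / 2 \<le> real (card D')" by (simp add: of_nat_diff)
  define F where "F = {S. S \<subseteq> D' \<and> (\<forall>s\<in>S. \<forall>t\<in>S. s \<noteq> t \<longrightarrow> Ash A s \<inter> Ash A t = {})}"
  have "{} \<in> F" by (simp add: F_def)
  moreover have "\<forall>S. S \<in> F \<longrightarrow> card S < card D' + 1"
  proof (intro allI impI)
    fix S assume "S \<in> F"
    hence "card S \<le> card D'" using fD' card_mono by (auto simp: F_def)
    thus "card S < card D' + 1" by simp
  qed
  ultimately obtain S where SF: "S \<in> F" and Smax: "\<forall>T. T \<in> F \<longrightarrow> card T \<le> card S"
    using Lattices_Big.ex_has_greatest_nat[of "\<lambda>S. S \<in> F" "{}" card "card D' + 1"] by blast
  have SD': "S \<subseteq> D'" using SF by (simp add: F_def)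
  have fS: "finite S" using fD' SD' finite_subset by blast
  have cover: "D' \<subseteq> (\<Union>t\<in>S. diffset A (Ash A t))"
  proof
    fix s assume sD': "s \<in> D'"
    have "\<exists>t\<in>S. Ash A s \<inter> Ash A t \<noteq> {}"
    proof (cases "s \<in> S")
      case True
      have "Ash A s \<noteq> {}" using Ash_ne sD' D'D DA by blast
      thus ?thesis using True by auto
    next
      case False
      show ?thesis
      proof (rule ccontr)
        assume "\<not> ?thesis"
        hence "insert s S \<in> F" using SF sD' by (auto simp: F_def)
        hence "card (insert s S) \<le> card S" using Smax by blast
        thus False using False fS by simp
      qed
    qed
    thus "s \<in> (\<Union>t\<in>S. diffset A (Ash A t))" using meet by blast
  qed
  have "real (card D') \<le> real (card (\<Union>t\<in>S. diffset A (Ash A t)))"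
    using cover by (intro of_nat_mono card_mono) (auto intro!: diffset_finite fA simp: fS Ash_def)
  also have "\<dots> \<le> (\<Sum>t\<in>S. w t)" unfolding w_def
    using card_UN_le[OF fS, of "\<lambda>t. diffset A (Ash A t)"] by (metis of_nat_le_iff of_nat_sum)
  also have "\<dots> \<le> (\<Sum>t\<in>S. c)" by (rule sum_mono) (use SD' in \<open>auto simp: D'_def\<close>)
  also have "\<dots> = real (card S) * c" by simp
  finally have "real (card D) / 2 \<le> real (card S) * (2 * \<sigma> / real (card D))"
    using hD' unfolding c_def by linarith
  hence "(real (card D))^2 \<le> 4 * \<sigma> * real (card S)"
    using cDpos by (simp add: field_simps power2_eq_square)
  hence "(real (card D))^2 / (4 * \<sigma>) \<le> real (card S)"
    using sigpos by (simp add: pos_divide_le_eq mult.commute mult.left_commute)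
  moreover have "S \<subseteq> D" using SD' D'D by blast
  moreover have "\<forall>s\<in>S. \<forall>t\<in>S. s \<noteq> t \<longrightarrow> Ash A s \<inter> Ash A t = {}" using SF by (simp add: F_def)
  ultimately show ?thesis unfolding \<sigma>_def w_def by blast
qed

lemma to_seq:
  assumes "finite S" "S \<subseteq> D" "\<forall>s\<in>S. \<forall>t\<in>S. s \<noteq> t \<longrightarrow> Ash A s \<inter> Ash A t = {}"
  shows "\<exists>(s::nat \<Rightarrow> 'a::ab_group_add). (\<forall>i<card S. s i \<in> D)
            \<and> (\<forall>i<card S. \<forall>j<card S. i \<noteq> j \<longrightarrow> Ash A (s i) \<inter> Ash A (s j) = {})"
proof -
  obtain h where h: "bij_betw h {0..<card S} S" using ex_bij_betw_nat_finite[OF assms(1)] by blast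
  show ?thesis
  proof (intro exI[of _ h] conjI allI impI)
    fix i assume "i < card S" thus "h i \<in> D" using h assms(2) bij_betwE by fastforce
  next
    fix i j assume ij: "i < card S" "j < card S" "i \<noteq> j"
    hence "h i \<noteq> h j" using h unfolding bij_betw_def inj_on_def by auto
    moreover have "h i \<in> S" "h j \<in> S" using ij h bij_betwE by fastforce+
    ultimately show "Ash A (h i) \<inter> Ash A (h j) = {}" using assms(3) by blast
  qed
qed

lemma sigma_le:
  assumes fA: "finite A"
  shows "(\<Sum>t\<in>diffset A A. card (diffset A (Ash A t))) \<le> card (sq_minus_diag A)"
proof -
  let ?D = "diffset A A"
  have fD: "finite ?D" by (rule diffset_finite[OF fA fA])
  have fin: "\<forall>t\<in>?D. finite (diffset A (Ash A t))"
    by (auto intro!: diffset_finite fA simp: Ash_def)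
  have fsq: "finite (sq_minus_diag A)"
  proof -
    have "sq_minus_diag A \<subseteq> (\<lambda>(a1,a2,a). (a1-a,a2-a)) ` (A \<times> A \<times> A)"
      by (auto simp: sq_minus_diag_def image_iff) blast
    thus ?thesis using fA finite_subset by blast
  qed
  have "card (SIGMA t:?D. diffset A (Ash A t)) \<le> card (sq_minus_diag A)"
  proof (rule card_inj_on_le[of "\<lambda>(s,u). (u,s)"])
    show "inj_on (\<lambda>(s,u). (u,s)) (SIGMA t:?D. diffset A (Ash A t))" by (auto simp: inj_on_def)
    show "(\<lambda>(s,u). (u,s)) ` (SIGMA t:?D. diffset A (Ash A t)) \<subseteq> sq_minus_diag A"
    proof clarsimp
      fix s u assume "s \<in> ?D" "u \<in> diffset A (Ash A s)"
      then obtain x y where xy: "x \<in> A" "y \<in> Ash A s" "u = x - y" by (auto simp: diffset_def)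
      then obtain a where a: "a \<in> A" "y = a - s" "y \<in> A" by (auto simp: Ash_def translate_minus_def)
      have "(u, s) = (x - y, a - y)" using xy a by simp
      thus "(u, s) \<in> sq_minus_diag A" using xy a unfolding sq_minus_diag_def by blast
    qed
    show "finite (sq_minus_diag A)" by (rule fsq)
  qed
  thus ?thesis using fD fin by simp
qed

theorem proposition8:
  fixes A D :: "'a::ab_group_add set"
  assumes "finite A" and "D \<subseteq> diffset A A"
  shows "(\<exists>(l::nat) (s::nat \<Rightarrow> 'a).
            real l \<ge> (real (card D))^2 / (4 * (\<Sum>t\<in>D. real (card (diffset A (Ash A t)))))
            \<and> (\<forall>i<l. s i \<in> D)
            \<and> (\<forall>i<l. \<forall>j<l. i \<noteq> j \<longrightarrow> Ash A (s i) \<inter> Ash A (s j) = {}))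
       \<and> (\<forall>M::real. M > 0 \<and> A \<noteq> {} \<and>
            real (card (sq_minus_diag A)) \<le> (real (card (diffset A A)))^2 / M \<longrightarrow>
            (\<exists>(l::nat) (s::nat \<Rightarrow> 'a). real l \<ge> M / 4
              \<and> (\<forall>i<l. s i \<in> diffset A A)
              \<and> (\<forall>i<l. \<forall>j<l. i \<noteq> j \<longrightarrow> Ash A (s i) \<inter> Ash A (s j) = {})))"
proof
  have fDD: "finite (diffset A A)" by (rule diffset_finite[OF assms(1) assms(1)])
  obtain S where S: "S \<subseteq> D" "\<forall>s\<in>S. \<forall>t\<in>S. s \<noteq> t \<longrightarrow> Ash A s \<inter> Ash A t = {}"
     "(real (card D))^2 / (4 * (\<Sum>t\<in>D. real (card (diffset A (Ash A t))))) \<le> real (card S)"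
    using part1[OF assms] by blast
  have fS: "finite S" by (rule finite_subset[OF subset_trans[OF S(1) assms(2)] fDD])
  then obtain s where "(\<forall>i<card S. s i \<in> D)
            \<and> (\<forall>i<card S. \<forall>j<card S. i \<noteq> j \<longrightarrow> Ash A (s i) \<inter> Ash A (s j) = {})"
    using to_seq[OF fS S(1,2)] by blast
  thus "\<exists>(l::nat) (s::nat \<Rightarrow> 'a).
            real l \<ge> (real (card D))^2 / (4 * (\<Sum>t\<in>D. real (card (diffset A (Ash A t)))))
            \<and> (\<forall>i<l. s i \<in> D)
            \<and> (\<forall>i<l. \<forall>j<l. i \<noteq> j \<longrightarrow> Ash A (s i) \<inter> Ash A (s j) = {})"
    using S(3) by (intro exI[of _ "card S"] exI[of _ s]) simp
next
  show "\<forall>M::real. M > 0 \<and> A \<noteq> {} \<and>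
            real (card (sq_minus_diag A)) \<le> (real (card (diffset A A)))^2 / M \<longrightarrow>
            (\<exists>(l::nat) (s::nat \<Rightarrow> 'a). real l \<ge> M / 4
              \<and> (\<forall>i<l. s i \<in> diffset A A)
              \<and> (\<forall>i<l. \<forall>j<l. i \<noteq> j \<longrightarrow> Ash A (s i) \<inter> Ash A (s j) = {}))"
  proof (intro allI impI)
    fix M :: real
    assume H: "M > 0 \<and> A \<noteq> {} \<and> real (card (sq_minus_diag A)) \<le> (real (card (diffset A A)))^2 / M"
    let ?D = "diffset A A"
    have fDD: "finite ?D" by (rule diffset_finite[OF assms(1) assms(1)])
    obtain a where a: "a \<in> A" using H by auto
    have "a - a \<in> ?D" using a unfolding diffset_def by blast
    hence Dne: "?D \<noteq> {}" by auto
    define \<sigma> where "\<sigma> = (\<Sum>t\<in>?D. real (card (diffset A (Ash A t))))"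
    have sle: "\<sigma> \<le> real (card (sq_minus_diag A))"
      unfolding \<sigma>_def using sigma_le[OF assms(1)] by (metis of_nat_le_iff of_nat_sum)
    have spos: "\<sigma> > 0"
    proof -
      have "\<forall>t\<in>?D. 0 < real (card (diffset A (Ash A t)))"
      proof
        fix t assume t: "t \<in> ?D"
        obtain y where y: "y \<in> Ash A t" using Ash_ne[OF t] by auto
        hence "y \<in> A" by (simp add: Ash_def)
        hence "y - y \<in> diffset A (Ash A t)" using y unfolding diffset_def by blast
        moreover have "finite (diffset A (Ash A t))"
          by (rule diffset_finite[OF assms(1)]) (simp add: Ash_def assms(1))
        ultimately show "0 < real (card (diffset A (Ash A t)))" by (auto simp: card_gt_0_iff)
      qed
      thus ?thesis unfolding \<sigma>_def by (intro sum_pos[OF fDD Dne]) auto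
    qed
    obtain S where S: "S \<subseteq> ?D" "\<forall>s\<in>S. \<forall>t\<in>S. s \<noteq> t \<longrightarrow> Ash A s \<inter> Ash A t = {}"
      "(real (card ?D))^2 / (4 * \<sigma>) \<le> real (card S)"
      using part1[OF assms(1) order_refl, folded \<sigma>_def] by blast
    let ?q = "real (card (sq_minus_diag A))"
    have qpos: "?q > 0" using sle spos by linarith
    have Mpos: "M > 0" and HH: "?q \<le> (real (card ?D))^2 / M" using H by auto
    have "?q * M \<le> (real (card ?D))^2" using HH Mpos by (simp add: le_divide_eq)
    hence "M * ?q \<le> (real (card ?D))^2" by (simp add: mult.commute)
    hence "M / 4 \<le> (real (card ?D))^2 / (4 * ?q)" using qpos by (simp add: field_simps)
    also have "\<dots> \<le> (real (card ?D))^2 / (4 * \<sigma>)"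
      using sle spos by (intro divide_left_mono) auto
    finally have M4: "M / 4 \<le> real (card S)" using S(3) by linarith
    have fS: "finite S" by (rule finite_subset[OF S(1) fDD])
    obtain s where s: "(\<forall>i<card S. s i \<in> ?D)
            \<and> (\<forall>i<card S. \<forall>j<card S. i \<noteq> j \<longrightarrow> Ash A (s i) \<inter> Ash A (s j) = {})"
      using to_seq[OF fS S(1,2)] by blast
    show "\<exists>(l::nat) (s::nat \<Rightarrow> 'a). real l \<ge> M / 4
              \<and> (\<forall>i<l. s i \<in> ?D)
              \<and> (\<forall>i<l. \<forall>j<l. i \<noteq> j \<longrightarrow> Ash A (s i) \<inter> Ash A (s j) = {})"
      using M4 s by (intro exI[of _ "card S"] exI[of _ s]) simp
  qed
qed

end
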